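(* Let $S=K[x_1,\dots,x_n]$ be a standard graded polynomial ring over a field $K$, and let $I\subset S$ be a graded ideal generated in a single degree, with minimal homogeneous generating set $f_1,\dots,f_m$. Assume $I$ has linear relations, i.e. the module of relations $\{(r_1,\dots,r_m)\in S^m:\sum_i r_if_i=0\}$ is generated by relations $(\ell_1,\dots,\ell_m)$ whose entries are linear forms. Then for every $1\le i\le m$, the colon ideal $(f_1,\dots,f_{i-1},f_{i+1},\dots,f_m):f_i$ is generated by linear forms. *)

theory Defs
  imports Main "HOL-Library.Poly_Mapping"
begin

text \<open>Polynomial ring S = K[x_i : i in 'n] represented as ('n =>0 nat) =>0 'k:
  a polynomial is a finitely supported map from monomials (exponent vectors) to coefficients;
  multiplication is the convolution product provided by HOL-Library.Poly_Mapping.\<close>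

type_synonym ('n, 'k) mpoly = "('n \<Rightarrow>\<^sub>0 nat) \<Rightarrow>\<^sub>0 'k"

definition mono_deg :: "('n::finite \<Rightarrow>\<^sub>0 nat) \<Rightarrow> nat" where
  "mono_deg \<alpha> = (\<Sum>v\<in>UNIV. Poly_Mapping.lookup \<alpha> v)"

text \<open>Homogeneous of degree d (the zero polynomial is homogeneous of every degree).\<close>
definition homogeneous :: "nat \<Rightarrow> ('n::finite, 'k::zero) mpoly \<Rightarrow> bool" where
  "homogeneous d p \<longleftrightarrow> (\<forall>\<alpha>\<in>Poly_Mapping.keys p. mono_deg \<alpha> = d)"

definition linear_form :: "('n::finite, 'k::zero) mpoly \<Rightarrow> bool" where
  "linear_form p \<longleftrightarrow> homogeneous 1 p"

definition ideal_gen :: "'a::comm_ring_1 set \<Rightarrow> 'a set" where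
  "ideal_gen G = {\<Sum>g\<in>T. c g * g | T c. finite T \<and> T \<subseteq> G}"

definition colon :: "'a::comm_ring_1 set \<Rightarrow> 'a \<Rightarrow> 'a set" where
  "colon J a = {r. r * a \<in> J}"

text \<open>Module of relations (syzygies) of f_0,...,f_(m-1), as elements of S^m
  represented by functions nat => S vanishing outside {..<m}.\<close>
definition relations :: "nat \<Rightarrow> (nat \<Rightarrow> 'a::comm_ring_1) \<Rightarrow> (nat \<Rightarrow> 'a) set" where
  "relations m f = {r. (\<forall>j\<ge>m. r j = 0) \<and> (\<Sum>j<m. r j * f j) = 0}"

definition submodule_gen :: "(nat \<Rightarrow> 'a::comm_ring_1) set \<Rightarrow> (nat \<Rightarrow> 'a) set" where
  "submodule_gen B = {(\<lambda>j. \<Sum>b\<in>T. c b * b j) | T c. finite T \<and> T \<subseteq> B}"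

definition has_linear_relations :: "nat \<Rightarrow> (nat \<Rightarrow> ('n::finite, 'k::comm_ring_1) mpoly) \<Rightarrow> bool" where
  "has_linear_relations m f \<longleftrightarrow>
     relations m f = submodule_gen {r \<in> relations m f. \<forall>j<m. linear_form (r j)}"

end

theory Submission
  imports Defs
begin

lemma sum_in_ideal:
  fixes a f :: "'b \<Rightarrow> 'a::comm_ring_1"
  assumes "finite A"
  shows "(\<Sum>j\<in>A. a j * f j) \<in> ideal_gen (f ` A)"
proof -
  have "(\<Sum>j\<in>A. a j * f j) = (\<Sum>g\<in>f ` A. \<Sum>j\<in>{j\<in>A. f j = g}. a j * f j)"
    using assms by (rule sum.image_gen)
  also have "\<dots> = (\<Sum>g\<in>f ` A. (\<Sum>j\<in>{j\<in>A. f j = g}. a j) * g)"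
    by (rule sum.cong) (auto simp: sum_distrib_right)
  finally have "(\<Sum>j\<in>A. a j * f j) = (\<Sum>g\<in>f ` A. (\<lambda>g. \<Sum>j\<in>{j\<in>A. f j = g}. a j) g * g)" by simp
  then show ?thesis unfolding ideal_gen_def mem_Collect_eq
    by (intro exI[of _ "f ` A"] exI[of _ "\<lambda>g. \<Sum>j\<in>{j\<in>A. f j = g}. a j"]) (simp add: assms)
qed

lemma ideal_gen_mono: "G \<subseteq> H \<Longrightarrow> ideal_gen G \<subseteq> ideal_gen H"
  unfolding ideal_gen_def by blast

theorem lemma1p1:
  fixes f :: "nat \<Rightarrow> ('n::finite, 'k::field) mpoly"
    and m d :: nat
  assumes single_degree: "\<forall>j<m. homogeneous d (f j)"
    and minimal: "\<forall>j<m. f j \<notin> ideal_gen (f ` ({..<m} - {j}))"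
    and lin_rel: "has_linear_relations m f"
    and i: "i < m"
  shows "\<exists>L. (\<forall>l\<in>L. linear_form l) \<and>
             colon (ideal_gen (f ` ({..<m} - {i}))) (f i) = ideal_gen L"
proof -
  define B where "B = {r \<in> relations m f. \<forall>j<m. linear_form (r j)}"
  have relB: "relations m f = submodule_gen B" using lin_rel
    unfolding has_linear_relations_def B_def by simp
  have inj: "inj_on f {..<m}"
  proof (rule inj_onI, rule ccontr)
    fix j k assume jk: "j \<in> {..<m}" "k \<in> {..<m}" "f j = f k" "j \<noteq> k"
    have "f j = (\<Sum>g\<in>{f k}. (\<lambda>_. 1) g * g)" using jk by simp
    moreover have "{f k} \<subseteq> f ` ({..<m} - {j})" using jk by auto
    ultimately have "f j \<in> ideal_gen (f ` ({..<m} - {j}))"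
      unfolding ideal_gen_def mem_Collect_eq
      by (intro exI[of _ "{f k}"] exI[of _ "\<lambda>_. 1"]) simp
    with minimal jk show False by auto
  qed
  define L where "L = (\<lambda>b. b i) ` B"
  have "\<forall>l\<in>L. linear_form l" using i unfolding L_def B_def by auto
  moreover have "colon (ideal_gen (f ` ({..<m} - {i}))) (f i) = ideal_gen L"
  proof
    show "colon (ideal_gen (f ` ({..<m} - {i}))) (f i) \<subseteq> ideal_gen L"
    proof
      fix r assume "r \<in> colon (ideal_gen (f ` ({..<m} - {i}))) (f i)"
      then obtain T c where T: "finite T" "T \<subseteq> f ` ({..<m} - {i})"
        and rf: "r * f i = (\<Sum>g\<in>T. c g * g)"
        unfolding colon_def ideal_gen_def by blast
      define A where "A = {j\<in>{..<m} - {i}. f j \<in> T}"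
      have fA: "f ` A = T" using T(2) unfolding A_def by auto
      have injA: "inj_on f A" using inj unfolding A_def by (auto intro: inj_on_subset)
      define R where "R = (\<lambda>j. if j = i then r else if j \<in> A then - c (f j) else 0)"
      have "(\<Sum>j<m. R j * f j) = R i * f i + (\<Sum>j\<in>{..<m} - {i}. R j * f j)"
        using i by (simp add: sum.remove)
      also have "(\<Sum>j\<in>{..<m} - {i}. R j * f j) = (\<Sum>j\<in>A. R j * f j)"
        by (rule sum.mono_neutral_right) (auto simp: A_def R_def)
      also have "\<dots> = (\<Sum>j\<in>A. - (c (f j) * f j))"
        by (rule sum.cong) (auto simp: A_def R_def)
      also have "\<dots> = - (\<Sum>g\<in>T. c g * g)"
        using sum.reindex[OF injA, of "\<lambda>g. c g * g"] fA by (simp add: sum_negf)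
      finally have "(\<Sum>j<m. R j * f j) = 0" using rf by (simp add: R_def)
      moreover have "\<forall>j\<ge>m. R j = 0" using i by (auto simp: R_def A_def)
      ultimately have "R \<in> relations m f" unfolding relations_def by blast
      then have "R \<in> submodule_gen B" using relB by simp
      then obtain U e where U: "finite U" "U \<subseteq> B" and Re: "R = (\<lambda>j. \<Sum>b\<in>U. e b * b j)"
        unfolding submodule_gen_def by blast
      have "r = (\<Sum>b\<in>U. e b * b i)" using fun_cong[OF Re, of i] by (simp add: R_def)
      moreover have "(\<Sum>b\<in>U. e b * b i) \<in> ideal_gen ((\<lambda>b. b i) ` U)"
        using sum_in_ideal[OF U(1), of e "\<lambda>b. b i"] by simp
      moreover have "ideal_gen ((\<lambda>b. b i) ` U) \<subseteq> ideal_gen L"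
        using U(2) unfolding L_def by (intro ideal_gen_mono) auto
      ultimately show "r \<in> ideal_gen L" by auto
    qed
  next
    show "ideal_gen L \<subseteq> colon (ideal_gen (f ` ({..<m} - {i}))) (f i)"
    proof
      fix x assume "x \<in> ideal_gen L"
      then obtain T c where T: "finite T" "T \<subseteq> L" and x: "x = (\<Sum>l\<in>T. c l * l)"
        unfolding ideal_gen_def by blast
      define bl where "bl = (\<lambda>l. SOME b. b \<in> B \<and> b i = l)"
      have bl: "bl l \<in> B \<and> bl l i = l" if "l \<in> T" for l
      proof -
        from that T(2) obtain b where "b \<in> B" "b i = l" unfolding L_def by auto
        then show ?thesis unfolding bl_def using someI[where P="\<lambda>b. b \<in> B \<and> b i = l" and x=b] by blast
      qed
      define R where "R = (\<lambda>j. \<Sum>l\<in>T. c l * bl l j)"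
      have rel: "bl l \<in> relations m f" if "l \<in> T" for l using bl[OF that] unfolding B_def by auto
      have Rz: "(\<Sum>j<m. R j * f j) = 0"
      proof -
        have "(\<Sum>j<m. R j * f j) = (\<Sum>l\<in>T. c l * (\<Sum>j<m. bl l j * f j))"
          unfolding R_def by (simp add: sum_distrib_right sum_distrib_left mult.assoc sum.swap[of _ T])
        also have "\<dots> = 0" using rel by (simp add: relations_def)
        finally show ?thesis .
      qed
      have Ri: "R i = x" unfolding R_def x using bl by (auto intro: sum.cong)
      have "0 = R i * f i + (\<Sum>j\<in>{..<m} - {i}. R j * f j)"
        using i Rz by (simp add: sum.remove)
      then have "x * f i = (\<Sum>j\<in>{..<m} - {i}. (- R j) * f j)"
        using Ri by (simp add: sum_negf eq_neg_iff_add_eq_0 add.commute)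
      moreover have "(\<Sum>j\<in>{..<m} - {i}. (- R j) * f j) \<in> ideal_gen (f ` ({..<m} - {i}))"
        by (rule sum_in_ideal) simp
      ultimately show "x \<in> colon (ideal_gen (f ` ({..<m} - {i}))) (f i)"
        unfolding colon_def by simp
    qed
  qed
  ultimately show ?thesis by blast
qed

end
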